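(* Let $S$ be a set of $n$ pairwise disjoint line segments in the plane, $1\le k\le n-1$, and $s\in S$. Let $V_k(s,S)=\bigcup_{H\subset S,\ |H|=k,\ s\in H}\overline{V_k(H,S)}$. Then $s\subseteq V_k(s,S)$ and $V_k(s,S)$ is weakly star-shaped with respect to $s$: for every point $x\in V_k(s,S)$ there exists a point $y\in s$ such that the whole segment $xy$ is contained in $V_k(s,S)$.
   Context: Distances are Euclidean: $d(x,s)=\min_{q\in s}d(x,q)$. $V_k(H,S)=\{x : d(x,s')<d(x,t)\ \forall s'\in H,\ \forall t\in S\setminus H\}$, and $\overline{X}$ denotes topological closure. *)

theory Defs
  imports "HOL-Analysis.Analysis"
begin

text \<open>Points of the plane are vectors in real^2; a line segment is a nondegenerate
closed segment. Distance from a point to a segment is the library infdist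
(the minimum exists since segments are compact).\<close>

definition is_line_segment :: "(real^2) set \<Rightarrow> bool" where
  "is_line_segment s \<longleftrightarrow> (\<exists>a b. a \<noteq> b \<and> s = closed_segment a b)"

definition Vk_region :: "(real^2) set set \<Rightarrow> (real^2) set set \<Rightarrow> (real^2) set" where
  "Vk_region H S = {x. \<forall>s'\<in>H. \<forall>t\<in>S - H. infdist x s' < infdist x t}"

definition Vk_site :: "nat \<Rightarrow> (real^2) set \<Rightarrow> (real^2) set set \<Rightarrow> (real^2) set" where
  "Vk_site k s S = (\<Union>H\<in>{H. H \<subseteq> S \<and> card H = k \<and> s \<in> H}. closure (Vk_region H S))"

end

theory Submission
  imports Defs
begin

lemma closure_UN_finite:
  assumes "finite I"
  shows "closure (\<Union>i\<in>I. A i) = (\<Union>i\<in>I. closure (A i))"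
  using assms by (induction I rule: finite_induct) auto

lemma core:
  fixes x y z q :: "real^2"
  assumes "y \<in> t" "z \<in> closed_segment x y" "z \<noteq> x" "compact b" "b \<noteq> {}" "y \<notin> b"
    "dist x y \<le> infdist x b"
  shows "dist z y < infdist z b"
proof (rule ccontr)
  assume "\<not> dist z y < infdist z b"
  hence le: "infdist z b \<le> dist z y" by simp
  obtain q where q: "q \<in> b" "infdist z b = dist z q"
    using infdist_attains_inf[of b z] assms compact_imp_closed by blast
  have seg: "dist x y = dist x z + dist z y"
    using assms(2) between[of x y z] between_mem_segment by blast
  have "dist x q \<ge> infdist x b" using infdist_le[OF q(1)] by simp
  hence "dist x q \<ge> dist x y" using assms(7) by simp
  moreover have "dist x q \<le> dist x z + dist z q" by (rule dist_triangle)
  ultimately have e1: "dist x q = dist x z + dist z q" and e2: "dist z q = dist z y"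
    using seg le q(2) by linarith+
  have p1: "norm (x - z) *\<^sub>R (z - q) = norm (z - q) *\<^sub>R (x - z)"
    using e1 dist_triangle_eq by blast
  have p2: "norm (x - z) *\<^sub>R (z - y) = norm (z - y) *\<^sub>R (x - z)"
    using seg dist_triangle_eq by blast
  have "norm (z - q) = norm (z - y)" using e2 by (simp add: dist_norm)
  hence "norm (x - z) *\<^sub>R (z - q) = norm (x - z) *\<^sub>R (z - y)" using p1 p2 by simp
  moreover have "norm (x - z) \<noteq> 0" using assms(3) by simp
  ultimately have "z - q = z - y" by simp
  hence "q = y" by simp
  thus False using q(1) assms(6) by simp
qed

definition good :: "(real^2) set set \<Rightarrow> bool" where
  "good S \<longleftrightarrow> finite S \<and> (\<forall>t\<in>S. compact t \<and> t \<noteq> {}) \<and>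
     (\<forall>t1\<in>S. \<forall>t2\<in>S. t1 \<noteq> t2 \<longrightarrow> t1 \<inter> t2 = {})"

lemma open_gap:
  assumes "finite P" "finite Q"
  shows "open {x::real^2. \<forall>a\<in>P. \<forall>b\<in>Q. infdist x a < infdist x b}"
proof -
  have eq: "{x::real^2. \<forall>a\<in>P. \<forall>b\<in>Q. infdist x a < infdist x b}
      = (\<Inter>a\<in>P. \<Inter>b\<in>Q. {x. infdist x a < infdist x b})" by auto
  have "open {x::real^2. infdist x a < infdist x b}" for a b
    by (intro open_Collect_less continuous_on_infdist continuous_on_id)
  thus ?thesis unfolding eq using assms by (intro open_INT) auto
qed

lemma move:
  assumes g: "good S" and t: "t \<in> S" and e: "\<epsilon> > 0"
  shows "\<exists>x'. dist x x' < \<epsilon> \<and>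
     (\<forall>b\<in>S - {t}. infdist x t \<le> infdist x b \<longrightarrow> infdist x' t < infdist x' b)"
proof -
  have ct: "compact t" "t \<noteq> {}" using g t unfolding good_def by auto
  obtain y where y: "y \<in> t" "infdist x t = dist x y"
    using infdist_attains_inf[of t x] ct compact_imp_closed by blast
  have yb: "y \<notin> b" if "b \<in> S - {t}" for b
    using g t that y(1) unfolding good_def by blast
  have cb: "compact b" "b \<noteq> {}" if "b \<in> S" for b
    using g that unfolding good_def by auto
  show ?thesis
  proof (cases "x = y")
    case True
    show ?thesis
    proof (intro exI conjI ballI impI)
      show "dist x x < \<epsilon>" using e by simp
      fix b assume b: "b \<in> S - {t}"
      have "infdist x t = 0" using y True by simp
      moreover have "infdist x b > 0"
        using infdist_pos_not_in_closed[of b x] cb[of b] b yb[OF b] True compact_imp_closed by auto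
      ultimately show "infdist x t < infdist x b" by simp
    qed
  next
    case False
    define r where "r = dist x y"
    have r: "r > 0" using False by (simp add: r_def)
    define u where "u = min (\<epsilon>/2) r"
    have u: "0 < u" "u \<le> r" "u < \<epsilon>" using r e by (auto simp: u_def)
    define z where "z = x + (u / r) *\<^sub>R (y - x)"
    have zseg: "z \<in> closed_segment x y"
      unfolding z_def closed_segment_def using u r
      by (auto intro!: exI[of _ "u/r"] simp: algebra_simps)
    have dz: "dist x z = u" unfolding z_def using u r
      by (simp add: dist_norm r_def norm_minus_commute)
    have zx: "z \<noteq> x" using dz u by auto
    show ?thesis
    proof (intro exI conjI ballI impI)
      show "dist x z < \<epsilon>" using dz u by simp
      fix b assume b: "b \<in> S - {t}" and le: "infdist x t \<le> infdist x b"
      have "dist z y < infdist z b"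
        using core[OF y(1) zseg zx _ _ yb[OF b]] cb[of b] b le y(2) by auto
      moreover have "infdist z t \<le> dist z y" using infdist_le[OF y(1)] .
      ultimately show "infdist z t < infdist z b" by simp
    qed
  qed
qed


lemma extend:
  assumes g: "good S"
  shows "card G + j \<le> card S \<Longrightarrow> G \<subseteq> S \<Longrightarrow>
    (\<forall>a\<in>G. \<forall>b\<in>S - G. infdist x a < infdist x b) \<Longrightarrow> \<epsilon> > 0 \<Longrightarrow>
    \<exists>x' G'. G \<subseteq> G' \<and> G' \<subseteq> S \<and> card G' = card G + j \<and> dist x x' < \<epsilon> \<and>
      (\<forall>a\<in>G'. \<forall>b\<in>S - G'. infdist x' a < infdist x' b)"
proof (induction j arbitrary: x G \<epsilon>)
  case 0
  then show ?case by (intro exI[of _ x] exI[of _ G]) auto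
next
  case (Suc j)
  have fS: "finite S" using g unfolding good_def by simp
  have fG: "finite G" using Suc.prems(2) fS finite_subset by blast
  have "card G < card S" using Suc.prems(1) by simp
  have ne: "S - G \<noteq> {}"
  proof
    assume "S - G = {}"
    hence "S \<subseteq> G" by blast
    hence "card S \<le> card G" using fG by (simp add: card_mono)
    thus False using \<open>card G < card S\<close> by simp
  qed
  define m where "m = Min ((\<lambda>b. infdist x b) ` (S - G))"
  have "m \<in> (\<lambda>b. infdist x b) ` (S - G)" unfolding m_def
    using ne fS by (intro Min_in) auto
  then obtain c where c: "c \<in> S - G" "infdist x c = m" by auto
  have cmin: "infdist x c \<le> infdist x b" if "b \<in> S - G" for b
    unfolding c(2) m_def using fS that by (intro Min_le) auto
  have op: "open {x::real^2. \<forall>a\<in>G. \<forall>b\<in>S - G. infdist x a < infdist x b}"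
    using fG fS by (intro open_gap) auto
  moreover have xin: "x \<in> {x::real^2. \<forall>a\<in>G. \<forall>b\<in>S - G. infdist x a < infdist x b}"
    using Suc.prems(3) by simp
  ultimately obtain \<delta> where d: "\<delta> > 0" "ball x \<delta> \<subseteq> {x::real^2. \<forall>a\<in>G. \<forall>b\<in>S - G. infdist x a < infdist x b}"
    by (rule openE)
  obtain x1 where x1: "dist x x1 < min \<delta> (\<epsilon>/2)"
    "\<forall>b\<in>S - {c}. infdist x c \<le> infdist x b \<longrightarrow> infdist x1 c < infdist x1 b"
    using move[OF g, of c "min \<delta> (\<epsilon>/2)" x] c(1) d(1) Suc.prems(4) by auto
  have x1G: "\<forall>a\<in>G. \<forall>b\<in>S - G. infdist x1 a < infdist x1 b"
    using d(2) x1(1) by auto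
  define G1 where "G1 = insert c G"
  have gap1: "\<forall>a\<in>G1. \<forall>b\<in>S - G1. infdist x1 a < infdist x1 b"
  proof (intro ballI)
    fix a b assume a: "a \<in> G1" and b: "b \<in> S - G1"
    have bG: "b \<in> S - G" "b \<noteq> c" using b unfolding G1_def by auto
    show "infdist x1 a < infdist x1 b"
    proof (cases "a = c")
      case True
      then show ?thesis using x1(2) cmin[OF bG(1)] bG by auto
    next
      case False
      then have "a \<in> G" using a unfolding G1_def by auto
      then show ?thesis using x1G bG(1) by blast
    qed
  qed
  have cG1: "card G1 = card G + 1" unfolding G1_def using c(1) fG by simp
  obtain x' G' where r: "G1 \<subseteq> G'" "G' \<subseteq> S" "card G' = card G1 + j" "dist x1 x' < \<epsilon>/2"
      "\<forall>a\<in>G'. \<forall>b\<in>S - G'. infdist x' a < infdist x' b"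
  proof -
    have "card G1 + j \<le> card S" using Suc.prems(1) cG1 by simp
    moreover have "G1 \<subseteq> S" using Suc.prems(2) c(1) unfolding G1_def by auto
    moreover have "\<epsilon>/2 > 0" using Suc.prems(4) by simp
    ultimately show ?thesis using Suc.IH[of G1 x1 "\<epsilon>/2"] gap1 that by blast
  qed
  have "dist x x' \<le> dist x x1 + dist x1 x'" by (rule dist_triangle)
  hence "dist x x' < \<epsilon>" using x1(1) r(4) by simp
  thus ?case using r cG1 unfolding G1_def by (intro exI[of _ x'] exI[of _ G']) auto
qed


lemma in_site:
  assumes g: "good S" and s: "s \<in> S" and k: "1 \<le> k" "k \<le> card S"
    and A: "card {t\<in>S. infdist z t \<le> infdist z s} \<le> k"
  shows "z \<in> Vk_site k s S"
proof -
  have fS: "finite S" using g unfolding good_def by simp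
  define F where "F = {H. H \<subseteq> S \<and> card H = k \<and> s \<in> H}"
  have fF: "finite F" 
  proof (rule finite_subset)
    show "F \<subseteq> Pow S" unfolding F_def by auto
    show "finite (Pow S)" using fS by simp
  qed
  have eqV: "Vk_site k s S = closure (\<Union>H\<in>F. Vk_region H S)"
    unfolding Vk_site_def F_def[symmetric] using closure_UN_finite[OF fF, of "\<lambda>H. Vk_region H S"] by simp
  define B where "B = {t\<in>S. infdist z t < infdist z s}"
  define G0 where "G0 = insert s B"
  have fB: "finite B" unfolding B_def using fS by simp
  have G0S: "G0 \<subseteq> S" unfolding G0_def B_def using s by auto
  have "G0 \<subseteq> {t\<in>S. infdist z t \<le> infdist z s}" unfolding G0_def B_def using s by auto
  hence "card G0 \<le> card {t\<in>S. infdist z t \<le> infdist z s}"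
    by (rule card_mono[rotated]) (use fS in simp)
  hence cG0: "card G0 \<le> k" using A by linarith
  have "\<forall>\<epsilon>>0. \<exists>y\<in>(\<Union>H\<in>F. Vk_region H S). dist y z < \<epsilon>"
  proof (intro allI impI)
    fix \<epsilon> :: real assume e: "\<epsilon> > 0"
    have op: "open {x::real^2. \<forall>a\<in>B. \<forall>b\<in>S - G0. infdist x a < infdist x b}"
      using fB fS by (intro open_gap) auto
    moreover have xin: "z \<in> {x::real^2. \<forall>a\<in>B. \<forall>b\<in>S - G0. infdist x a < infdist x b}"
      unfolding G0_def B_def by auto
    ultimately obtain \<delta> where d: "\<delta> > 0"
      "ball z \<delta> \<subseteq> {x::real^2. \<forall>a\<in>B. \<forall>b\<in>S - G0. infdist x a < infdist x b}"
      by (rule openE)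
    have me: "min \<delta> (\<epsilon>/2) > 0" using d(1) e by simp
    obtain x1 where x1: "dist z x1 < min \<delta> (\<epsilon>/2)"
      "\<forall>b\<in>S - {s}. infdist z s \<le> infdist z b \<longrightarrow> infdist x1 s < infdist x1 b"
      using move[OF g s me, of z] by blast
    have x1B: "\<forall>a\<in>B. \<forall>b\<in>S - G0. infdist x1 a < infdist x1 b"
      using d(2) x1(1) by auto
    have gap: "\<forall>a\<in>G0. \<forall>b\<in>S - G0. infdist x1 a < infdist x1 b"
    proof (intro ballI)
      fix a b assume a: "a \<in> G0" and b: "b \<in> S - G0"
      show "infdist x1 a < infdist x1 b"
      proof (cases "a = s")
        case True
        have "b \<in> S - {s}" "infdist z s \<le> infdist z b"
          using b unfolding G0_def B_def by auto
        then show ?thesis using x1(2) True by blast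
      next
        case False
        then have "a \<in> B" using a unfolding G0_def by auto
        then show ?thesis using x1B b by blast
      qed
    qed
    have e2: "\<epsilon>/2 > 0" using e by simp
    obtain x' G' where r: "G0 \<subseteq> G'" "G' \<subseteq> S" "card G' = card G0 + (k - card G0)"
        "dist x1 x' < \<epsilon>/2" "\<forall>a\<in>G'. \<forall>b\<in>S - G'. infdist x' a < infdist x' b"
    proof -
      have "card G0 + (k - card G0) \<le> card S" using cG0 k by linarith
      thus ?thesis using extend[OF g _ G0S gap e2, of "k - card G0"] that by blast
    qed
    have "card G' = k" using r(3) cG0 by linarith
    moreover have "s \<in> G'" using r(1) unfolding G0_def by blast
    ultimately have "G' \<in> F" unfolding F_def using r(2) by blast
    moreover have "x' \<in> Vk_region G' S" unfolding Vk_region_def using r(5) by auto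
    moreover have "dist x' z < \<epsilon>"
    proof -
      have "dist z x' \<le> dist z x1 + dist x1 x'" by (rule dist_triangle)
      thus ?thesis using x1(1) r(4) by (simp add: dist_commute)
    qed
    ultimately show "\<exists>y\<in>(\<Union>H\<in>F. Vk_region H S). dist y z < \<epsilon>" by blast
  qed
  thus ?thesis unfolding eqV closure_approachable .
qed


theorem lemma4:
  fixes S :: "(real^2) set set" and n k :: nat and s :: "(real^2) set"
  assumes "finite S" and "card S = n"
    and "\<forall>t\<in>S. is_line_segment t"
    and "\<forall>t1\<in>S. \<forall>t2\<in>S. t1 \<noteq> t2 \<longrightarrow> t1 \<inter> t2 = {}"
    and "1 \<le> k" and "k \<le> n - 1"
    and "s \<in> S"
  shows "s \<subseteq> Vk_site k s S \<and>
         (\<forall>x\<in>Vk_site k s S. \<exists>y\<in>s. closed_segment x y \<subseteq> Vk_site k s S)"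
proof -
  have ct: "compact t \<and> t \<noteq> {}" if "t \<in> S" for t
  proof -
    have "\<exists>a b. a \<noteq> b \<and> t = closed_segment a b"
      using bspec[OF assms(3) that] unfolding is_line_segment_def .
    then obtain a b where "t = closed_segment a b" by (elim exE conjE)
    thus ?thesis using compact_segment[of a b] ends_in_segment(1)[of a b] by blast
  qed
  have g: "good S" unfolding good_def
  proof (intro conjI)
    show "finite S" by fact
    show "\<forall>t\<in>S. compact t \<and> t \<noteq> {}" using ct by (intro ballI)
    show "\<forall>t1\<in>S. \<forall>t2\<in>S. t1 \<noteq> t2 \<longrightarrow> t1 \<inter> t2 = {}" by fact
  qed
  have kS: "k \<le> card S" using assms(2,6) by linarith
  have fS: "finite S" by fact
  have cs: "compact s" "s \<noteq> {}" using ct assms(7) by auto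
  have part1: "s \<subseteq> Vk_site k s S"
  proof
    fix p assume p: "p \<in> s"
    have "{t\<in>S. infdist p t \<le> infdist p s} \<subseteq> {s}"
    proof
      fix t assume t: "t \<in> {t\<in>S. infdist p t \<le> infdist p s}"
      show "t \<in> {s}"
      proof (rule ccontr)
        assume "t \<notin> {s}"
        hence ts: "t \<noteq> s" by simp
        have tS: "t \<in> S" using t by simp
        have "p \<notin> t" using assms(4)[rule_format, OF tS assms(7) ts] p by auto
        hence "infdist p t > 0" using ct[of t] t compact_imp_closed
          by (intro infdist_pos_not_in_closed) auto
        moreover have "infdist p s = 0" using p by simp
        ultimately show False using t by simp
      qed
    qed
    hence "card {t\<in>S. infdist p t \<le> infdist p s} \<le> card {s}"
      by (rule card_mono[rotated]) simp
    hence "card {t\<in>S. infdist p t \<le> infdist p s} \<le> k" using assms(5) by simp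
    thus "p \<in> Vk_site k s S" by (rule in_site[OF g assms(7) assms(5) kS])
  qed
  have part2: "\<exists>y\<in>s. closed_segment x y \<subseteq> Vk_site k s S" if x: "x \<in> Vk_site k s S" for x
  proof -
    obtain H where H: "H \<subseteq> S" "card H = k" "s \<in> H" "x \<in> closure (Vk_region H S)"
      using x unfolding Vk_site_def by blast
    define B where "B = {t\<in>S. infdist x t < infdist x s}"
    have BH: "B \<subseteq> H - {s}"
    proof
      fix t assume t: "t \<in> B"
      have ts: "t \<noteq> s" using t unfolding B_def by auto
      have "t \<in> H"
      proof (rule ccontr)
        assume tH: "t \<notin> H"
        have op: "open {w::real^2. infdist w t < infdist w s}"
          by (intro open_Collect_less continuous_on_infdist continuous_on_id)
        moreover have "x \<in> {w::real^2. infdist w t < infdist w s}" using t unfolding B_def by simp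
        ultimately obtain \<delta> where d: "\<delta> > 0" "ball x \<delta> \<subseteq> {w::real^2. infdist w t < infdist w s}"
          by (rule openE)
        obtain w where w: "w \<in> Vk_region H S" "dist w x < \<delta>"
          using H(4) d(1) unfolding closure_approachable by blast
        have "w \<in> ball x \<delta>" using w(2) by (simp add: dist_commute)
        hence "infdist w t < infdist w s" using d(2) by blast
        moreover have "infdist w s < infdist w t"
          using w(1) H(3) tH t unfolding Vk_region_def B_def by auto
        ultimately show False by simp
      qed
      thus "t \<in> H - {s}" using ts by simp
    qed
    have fH: "finite H" using H(1) fS finite_subset by blast
    have cB: "card B \<le> k - 1"
    proof -
      have "card B \<le> card (H - {s})" using BH fH by (simp add: card_mono)
      also have "\<dots> = k - 1" using H(2,3) fH by simp
      finally show ?thesis .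
    qed
    obtain y where y: "y \<in> s" "infdist x s = dist x y"
      using infdist_attains_inf[of s x] cs compact_imp_closed by blast
    have "closed_segment x y \<subseteq> Vk_site k s S"
    proof
      fix z assume z: "z \<in> closed_segment x y"
      show "z \<in> Vk_site k s S"
      proof (cases "z = x")
        case True
        then show ?thesis using x by simp
      next
        case False
        have sub: "{t\<in>S. infdist z t \<le> infdist z s} \<subseteq> insert s B"
        proof
          fix t assume t: "t \<in> {t\<in>S. infdist z t \<le> infdist z s}"
          show "t \<in> insert s B"
          proof (rule ccontr)
            assume nt: "t \<notin> insert s B"
            hence "dist x y \<le> infdist x t" using t y(2) unfolding B_def by auto
            moreover have "y \<notin> t"
            proof -
              have tS: "t \<in> S" using t by simp
              have ts: "t \<noteq> s" using nt by simp
              show ?thesis using assms(4)[rule_format, OF tS assms(7) ts] y(1) by auto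
            qed
            ultimately have "dist z y < infdist z t"
              using core[OF y(1) z False] ct[of t] t by auto
            moreover have "infdist z s \<le> dist z y" using infdist_le[OF y(1)] .
            ultimately show False using t by simp
          qed
        qed
        have fB: "finite B" unfolding B_def using fS by simp
        have "card {t\<in>S. infdist z t \<le> infdist z s} \<le> card (insert s B)"
          by (rule card_mono[OF _ sub]) (use fB in simp)
        also have "\<dots> \<le> card B + 1" using fB by (simp add: card_insert_le_m1)
        finally have "card {t\<in>S. infdist z t \<le> infdist z s} \<le> k" using cB assms(5) by linarith
        thus ?thesis by (rule in_site[OF g assms(7) assms(5) kS])
      qed
    qed
    thus ?thesis using y(1) by blast
  qed
  show ?thesis using part1 part2 by blast
qed

end
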